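(* Let $n\ge 1$. For every $G\in\mathcal{G}_{2n}$ with $F(G)=n-1$ we have $\lfloor n/2\rfloor\le f(G)\le n-1$, and for every integer $m$ with $\lfloor n/2\rfloor\leq m\leq n-1$ there exists $G\in\mathcal{G}_{2n}$ with $F(G)=n-1$ and $f(G)=m$. That is, $\{f(G): G\in\mathcal{G}_{2n},\ F(G)=n-1\}=\{\lfloor n/2\rfloor,\dots,n-1\}$.
   Context: All graphs are finite and simple. $\mathcal{G}_{2n}$ denotes the set of all graphs with $2n$ vertices that have a perfect matching. For a perfect matching $M$ of $G$, a forcing set of $M$ is a subset $S\subseteq M$ contained in no other perfect matching of $G$; $f(G,M)$ is the minimum size of a forcing set of $M$. $f(G)$ and $F(G)$ are the minimum and maximum of $f(G,M)$ over all perfect matchings $M$ of $G$. *)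

theory Defs
  imports Main
begin

definition simple_graph :: "'a set \<Rightarrow> 'a set set \<Rightarrow> bool" where
  "simple_graph V E \<longleftrightarrow> finite V \<and>
     (\<forall>e\<in>E. \<exists>u v. e = {u, v} \<and> u \<noteq> v \<and> u \<in> V \<and> v \<in> V)"

definition perfect_matching :: "'a set \<Rightarrow> 'a set set \<Rightarrow> 'a set set \<Rightarrow> bool" where
  "perfect_matching V E M \<longleftrightarrow> M \<subseteq> E \<and> (\<forall>v\<in>V. \<exists>!e. e \<in> M \<and> v \<in> e)"

definition forcing_set :: "'a set \<Rightarrow> 'a set set \<Rightarrow> 'a set set \<Rightarrow> 'a set set \<Rightarrow> bool" where
  "forcing_set V E M S \<longleftrightarrow> S \<subseteq> M \<and>
     (\<forall>M'. perfect_matching V E M' \<and> S \<subseteq> M' \<longrightarrow> M' = M)"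

definition forcing_number :: "'a set \<Rightarrow> 'a set set \<Rightarrow> 'a set set \<Rightarrow> nat" where
  "forcing_number V E M = Min {card S | S. forcing_set V E M S}"

definition min_forcing_number :: "'a set \<Rightarrow> 'a set set \<Rightarrow> nat" where
  "min_forcing_number V E = Min {forcing_number V E M | M. perfect_matching V E M}"

definition max_forcing_number :: "'a set \<Rightarrow> 'a set set \<Rightarrow> nat" where
  "max_forcing_number V E = Max {forcing_number V E M | M. perfect_matching V E M}"

definition in_G2n :: "nat \<Rightarrow> 'a set \<Rightarrow> 'a set set \<Rightarrow> bool" where
  "in_G2n n V E \<longleftrightarrow> simple_graph V E \<and> card V = 2 * n \<and> (\<exists>M. perfect_matching V E M)"

end

theory Submission
  imports Defs
begin


locale pmctx =
  fixes V :: "'a set" and E :: "'a set set" and M :: "'a set set"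
  assumes sg: "simple_graph V E" and pm: "perfect_matching V E M"
begin

lemma finV: "finite V" using sg by (simp add: simple_graph_def)

lemma edgeE: "e \<in> E \<Longrightarrow> \<exists>u v. e = {u, v} \<and> u \<noteq> v \<and> u \<in> V \<and> v \<in> V"
  using sg by (simp add: simple_graph_def)

lemma ME: "M \<subseteq> E" using pm by (simp add: perfect_matching_def)

lemma edge_in_V: "e \<in> E \<Longrightarrow> x \<in> e \<Longrightarrow> x \<in> V" using edgeE by blast

lemma M_unique: "e1 \<in> M \<Longrightarrow> e2 \<in> M \<Longrightarrow> v \<in> e1 \<Longrightarrow> v \<in> e2 \<Longrightarrow> e1 = e2"
proof -
  assume a: "e1 \<in> M" "e2 \<in> M" "v \<in> e1" "v \<in> e2"
  then have "v \<in> V" using ME edge_in_V by blast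
  then have "\<exists>!e. e \<in> M \<and> v \<in> e" using pm by (simp add: perfect_matching_def)
  then show ?thesis using a by blast
qed

definition p :: "'a \<Rightarrow> 'a" where "p v = (THE u. {v, u} \<in> M)"

lemma partner_ex: "v \<in> V \<Longrightarrow> \<exists>u. {v,u} \<in> M \<and> u \<noteq> v"
proof -
  assume "v \<in> V"
  then obtain e where "e \<in> M" "v \<in> e" using pm by (auto simp: perfect_matching_def)
  then obtain a b where "e = {a,b}" "a \<noteq> b" using ME edgeE by blast
  then show ?thesis using \<open>e \<in> M\<close> \<open>v \<in> e\<close> by (auto simp: insert_commute)
qed

lemma partner_uniq: "{v,u} \<in> M \<Longrightarrow> {v,u'} \<in> M \<Longrightarrow> u = u'"
proof -
  assume a: "{v,u} \<in> M" "{v,u'} \<in> M"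
  then have e: "{v,u} = {v,u'}" using M_unique by blast
  have "{v,u} \<in> E" using a(1) ME by blast
  then obtain x y where xy: "{v,u} = {x,y}" "x \<noteq> y" using edgeE by blast
  have "u \<noteq> v"
  proof
    assume "u = v"
    then have "{x,y} = {v}" using xy by simp
    then have "x \<in> {v}" "y \<in> {v}" by (metis insertI1, metis insertI1 insertI2)
    then show False using xy(2) by simp
  qed
  moreover have "u \<in> {v,u'}" using e by blast
  ultimately show ?thesis by blast
qed

lemma p_M: "v \<in> V \<Longrightarrow> {v, p v} \<in> M"
  unfolding p_def using partner_ex partner_uniq by (metis theI)

lemma p_eq: "{v,u} \<in> M \<Longrightarrow> p v = u"
proof -
  assume a: "{v,u} \<in> M"
  then have "v \<in> V" using ME edge_in_V by blast
  then show ?thesis using a p_M partner_uniq by blast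
qed

lemma p_neq: "v \<in> V \<Longrightarrow> p v \<noteq> v"
  using partner_ex p_eq by metis

lemma p_V: "v \<in> V \<Longrightarrow> p v \<in> V"
  using p_M ME edge_in_V by blast

lemma pp: "v \<in> V \<Longrightarrow> p (p v) = v"
  using p_M p_eq by (metis insert_commute)

lemma p_inj: "v \<in> V \<Longrightarrow> w \<in> V \<Longrightarrow> p v = p w \<Longrightarrow> v = w"
  using pp by metis

lemma unc_p: "S \<subseteq> M \<Longrightarrow> v \<in> V \<Longrightarrow> v \<notin> \<Union>S \<Longrightarrow> p v \<notin> \<Union>S"
proof
  assume a: "S \<subseteq> M" "v \<in> V" "v \<notin> \<Union>S" "p v \<in> \<Union>S"
  then obtain e where "e \<in> S" "p v \<in> e" by blast
  then have "e = {v, p v}" using M_unique a p_M by (metis insertI1 insert_commute subsetD)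
  then show False using a \<open>e \<in> S\<close> by blast
qed

lemma swap:
  assumes D: "D \<subseteq> M" and N: "N \<subseteq> E" and U: "\<Union>D = \<Union>N"
    and Nu: "\<And>v e1 e2. e1 \<in> N \<Longrightarrow> e2 \<in> N \<Longrightarrow> v \<in> e1 \<Longrightarrow> v \<in> e2 \<Longrightarrow> e1 = e2"
  shows "perfect_matching V E ((M - D) \<union> N)"
  unfolding perfect_matching_def
proof (intro conjI ballI)
  show "M - D \<union> N \<subseteq> E" using ME N by blast
next
  fix v assume v: "v \<in> V"
  obtain e where e: "e \<in> M" "v \<in> e" using v pm by (auto simp: perfect_matching_def)
  have ex: "\<exists>e. e \<in> (M - D \<union> N) \<and> v \<in> e"
  proof (cases "e \<in> D")
    case True
    then have "v \<in> \<Union>N" using U e by blast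
    then show ?thesis by blast
  next
    case False then show ?thesis using e by blast
  qed
  have un: "e1 = e2" if "e1 \<in> (M - D \<union> N)" "v \<in> e1" "e2 \<in> (M - D \<union> N)" "v \<in> e2" for e1 e2
  proof -
    have c: False if "e1 \<in> M - D" "e2 \<in> N" "v \<in> e1" "v \<in> e2" for e1 e2
    proof -
      have "v \<in> \<Union>N" using that by blast
      then have "v \<in> \<Union>D" using U by simp
      then obtain d where d: "d \<in> D" "v \<in> d" by blast
      then have "d \<in> M" using D by blast
      then have "e1 = d" using M_unique that(1,3) d(2) by blast
      then show False using that(1) d(1) by blast
    qed
    show ?thesis
    proof (cases "e1 \<in> N")
      case T1: True
      show ?thesis
      proof (cases "e2 \<in> N")
        case True then show ?thesis using T1 Nu that by blast
      next
        case False then show ?thesis using T1 c that by blast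
      qed
    next
      case F1: False
      show ?thesis
      proof (cases "e2 \<in> N")
        case True then show ?thesis using F1 c that by blast
      next
        case False then have "e1 \<in> M" "e2 \<in> M" using F1 that by blast+
        then show ?thesis using M_unique that by blast
      qed
    qed
  qed
  show "\<exists>!e. e \<in> M - D \<union> N \<and> v \<in> e" using ex un by blast
qed

definition altex :: "'a set set \<Rightarrow> bool" where
  "altex S \<longleftrightarrow> (\<exists>M'. perfect_matching V E M' \<and> S \<subseteq> M' \<and> M' \<noteq> M)"

lemma M_edge: "{x,y} \<in> M \<Longrightarrow> x \<noteq> y \<and> x \<in> V \<and> y \<in> V"
  using ME edgeE by (metis doubleton_eq_iff insertI1 insert_commute subsetD edge_in_V)

lemma swap2:
  assumes "{x1,y1} \<in> M" "{x2,y2} \<in> M" "{x1,y1} \<noteq> {x2,y2}" "{x1,y1} \<notin> S" "{x2,y2} \<notin> S"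
    "S \<subseteq> M" "{x1,x2} \<in> E" "{y1,y2} \<in> E"
  shows "altex S"
proof -
  have d: "x1 \<noteq> y1" "x2 \<noteq> y2" using assms M_edge by auto
  have dd: "x1 \<noteq> x2" "x1 \<noteq> y2" "y1 \<noteq> x2" "y1 \<noteq> y2"
    using assms(1-3) M_unique by (metis insertI1 insert_commute)+
  let ?M' = "(M - {{x1,y1},{x2,y2}}) \<union> {{x1,x2},{y1,y2}}"
  have P: "perfect_matching V E ?M'"
    by (rule swap) (use assms d dd in auto)
  have Q: "S \<subseteq> ?M'" using assms by auto
  have R: "{x1,x2} \<notin> M"
  proof
    assume "{x1,x2} \<in> M"
    then have "{x1,x2} = {x1,y1}" using assms(1) M_unique by blast
    then show False using dd d by (auto simp: doubleton_eq_iff)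
  qed
  have T: "{x1,x2} \<in> ?M'" by simp
  have "?M' \<noteq> M" using R T by blast
  then show ?thesis unfolding altex_def using P Q by blast
qed

end


context pmctx begin

lemma Mdisj: "{a,b} \<in> M \<Longrightarrow> {c,d} \<in> M \<Longrightarrow> {a,b} \<noteq> {c,d} \<Longrightarrow> a \<noteq> c \<and> a \<noteq> d \<and> b \<noteq> c \<and> b \<noteq> d"
  using M_unique by (metis insertI1 insert_commute)

lemma notM: "{x,y} \<in> M \<Longrightarrow> z \<noteq> x \<Longrightarrow> z \<noteq> y \<Longrightarrow> {x,z} \<notin> M"
proof
  assume a: "{x,y} \<in> M" "z \<noteq> x" "z \<noteq> y" "{x,z} \<in> M"
  then have "{x,z} = {x,y}" using M_unique by blast
  then have "z \<in> {x,y}" by blast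
  then show False using a by blast
qed

lemma swap3:
  assumes e: "{x1,y1} \<in> M" "{x2,y2} \<in> M" "{x3,y3} \<in> M"
    and ne: "{x1,y1} \<noteq> {x2,y2}" "{x1,y1} \<noteq> {x3,y3}" "{x2,y2} \<noteq> {x3,y3}"
    and nS: "{x1,y1} \<notin> S" "{x2,y2} \<notin> S" "{x3,y3} \<notin> S" "S \<subseteq> M"
    and E: "{y1,x2} \<in> E" "{y2,x3} \<in> E" "{y3,x1} \<in> E"
  shows "altex S"
proof -
  have d: "x1 \<noteq> y1" "x2 \<noteq> y2" "x3 \<noteq> y3" using e M_edge by auto
  have d12: "x1 \<noteq> x2 \<and> x1 \<noteq> y2 \<and> y1 \<noteq> x2 \<and> y1 \<noteq> y2" using Mdisj e(1,2) ne(1) by blast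
  have d13: "x1 \<noteq> x3 \<and> x1 \<noteq> y3 \<and> y1 \<noteq> x3 \<and> y1 \<noteq> y3" using Mdisj e(1,3) ne(2) by blast
  have d23: "x2 \<noteq> x3 \<and> x2 \<noteq> y3 \<and> y2 \<noteq> x3 \<and> y2 \<noteq> y3" using Mdisj e(2,3) ne(3) by blast
  let ?D = "{{x1,y1},{x2,y2},{x3,y3}}" and ?N = "{{y1,x2},{y2,x3},{y3,x1}}"
  let ?M' = "(M - ?D) \<union> ?N"
  have P: "perfect_matching V E ?M'"
    by (rule swap) (use e E d d12 d13 d23 in auto)
  have Q: "S \<subseteq> ?M'" using nS by auto
  have R: "{y1,x2} \<notin> M" using notM[of y1 x1 x2] e(1) d12 by (auto simp: insert_commute)
  have T: "{y1,x2} \<in> ?M'" by simp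
  have "?M' \<noteq> M" using R T by blast
  then show ?thesis unfolding altex_def using P Q by blast
qed

lemma swap4:
  assumes e: "{x1,y1} \<in> M" "{x2,y2} \<in> M" "{x3,y3} \<in> M" "{x4,y4} \<in> M"
    and ne: "{x1,y1} \<noteq> {x2,y2}" "{x1,y1} \<noteq> {x3,y3}" "{x1,y1} \<noteq> {x4,y4}"
      "{x2,y2} \<noteq> {x3,y3}" "{x2,y2} \<noteq> {x4,y4}" "{x3,y3} \<noteq> {x4,y4}"
    and nS: "{x1,y1} \<notin> S" "{x2,y2} \<notin> S" "{x3,y3} \<notin> S" "{x4,y4} \<notin> S" "S \<subseteq> M"
    and E: "{y1,x2} \<in> E" "{y2,x3} \<in> E" "{y3,x4} \<in> E" "{y4,x1} \<in> E"
  shows "altex S"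
proof -
  have d: "x1 \<noteq> y1" "x2 \<noteq> y2" "x3 \<noteq> y3" "x4 \<noteq> y4" using e M_edge by auto
  have d12: "x1 \<noteq> x2 \<and> x1 \<noteq> y2 \<and> y1 \<noteq> x2 \<and> y1 \<noteq> y2" using Mdisj e(1,2) ne(1) by blast
  have d13: "x1 \<noteq> x3 \<and> x1 \<noteq> y3 \<and> y1 \<noteq> x3 \<and> y1 \<noteq> y3" using Mdisj e(1,3) ne(2) by blast
  have d14: "x1 \<noteq> x4 \<and> x1 \<noteq> y4 \<and> y1 \<noteq> x4 \<and> y1 \<noteq> y4" using Mdisj e(1,4) ne(3) by blast
  have d23: "x2 \<noteq> x3 \<and> x2 \<noteq> y3 \<and> y2 \<noteq> x3 \<and> y2 \<noteq> y3" using Mdisj e(2,3) ne(4) by blast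
  have d24: "x2 \<noteq> x4 \<and> x2 \<noteq> y4 \<and> y2 \<noteq> x4 \<and> y2 \<noteq> y4" using Mdisj e(2,4) ne(5) by blast
  have d34: "x3 \<noteq> x4 \<and> x3 \<noteq> y4 \<and> y3 \<noteq> x4 \<and> y3 \<noteq> y4" using Mdisj e(3,4) ne(6) by blast
  let ?D = "{{x1,y1},{x2,y2},{x3,y3},{x4,y4}}" and ?N = "{{y1,x2},{y2,x3},{y3,x4},{y4,x1}}"
  let ?M' = "(M - ?D) \<union> ?N"
  have U: "\<Union>?D = \<Union>?N" by (intro set_eqI) auto
  have Nu: "e1 = e2" if "e1 \<in> ?N" "e2 \<in> ?N" "v \<in> e1" "v \<in> e2" for v e1 e2
    using that(1,2) apply (elim insertE emptyE) using that(3,4) d d12 d13 d14 d23 d24 d34 by auto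
  have P: "perfect_matching V E ?M'"
  proof (rule swap)
    show "?D \<subseteq> M" using e by simp
    show "?N \<subseteq> E" using E by simp
  qed (rule U, rule Nu, assumption+)
  have Q: "S \<subseteq> ?M'" using nS by auto
  have R: "{y1,x2} \<notin> M" using notM[of y1 x1 x2] e(1) d12 by (auto simp: insert_commute)
  have T: "{y1,x2} \<in> ?M'" by simp
  have "?M' \<noteq> M" using R T by metis
  then show ?thesis unfolding altex_def using P Q by metis
qed

end


context pmctx begin

definition cfg where
  "cfg S A B C D \<longleftrightarrow> S \<subseteq> M \<and> A \<in> V \<and> B \<in> V \<and> C \<in> V \<and> D \<in> V \<and>
     A \<noteq> B \<and> A \<noteq> C \<and> A \<noteq> D \<and> B \<noteq> C \<and> B \<noteq> D \<and> C \<noteq> D \<and>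
     A \<notin> \<Union>S \<and> B \<notin> \<Union>S \<and> C \<notin> \<Union>S \<and> D \<notin> \<Union>S \<and>
     {A,B} \<in> E \<and> {C,D} \<in> E \<and> {A,C} \<in> E \<and> {B,D} \<in> E \<and>
     (\<forall>w\<in>V. w \<notin> \<Union>S \<longrightarrow> w \<noteq> A \<longrightarrow> w \<noteq> B \<longrightarrow> w \<noteq> C \<longrightarrow> w \<noteq> D \<longrightarrow>
        ({w,A} \<in> E \<or> {w,B} \<in> E) \<and> ({w,C} \<in> E \<or> {w,D} \<in> E))"

lemma cfg_sym1: "cfg S A B C D \<Longrightarrow> cfg S B A D C"
  unfolding cfg_def by (auto simp: insert_commute)
lemma cfg_sym2: "cfg S A B C D \<Longrightarrow> cfg S C D A B"
  unfolding cfg_def by (auto simp: insert_commute)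

lemma p_M': "v \<in> V \<Longrightarrow> {p v, v} \<in> M" using p_M by (simp add: insert_commute)
lemma notS: "x \<notin> \<Union>S \<Longrightarrow> {x,y} \<notin> S" by blast
lemma notS': "x \<notin> \<Union>S \<Longrightarrow> {y,x} \<notin> S" by blast
lemma pswap: "v \<in> V \<Longrightarrow> p v = w \<Longrightarrow> p w = v" using pp by blast

lemma neq2: "a \<noteq> c \<Longrightarrow> a \<noteq> d \<Longrightarrow> {a,b} \<noteq> {c,d}" by auto

lemma core_I:
  assumes c: "cfg S A B C D" and pa: "p A = B"
  shows "altex S"
proof -
  have S: "S \<subseteq> M" and V: "A \<in> V" "B \<in> V" "C \<in> V" "D \<in> V"
    and dist: "A \<noteq> B" "A \<noteq> C" "A \<noteq> D" "B \<noteq> C" "B \<noteq> D" "C \<noteq> D"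
    and u: "A \<notin> \<Union>S" "B \<notin> \<Union>S" "C \<notin> \<Union>S" "D \<notin> \<Union>S"
    and ed: "{A,B} \<in> E" "{C,D} \<in> E" "{A,C} \<in> E" "{B,D} \<in> E"
    and dom: "\<And>w. w\<in>V \<Longrightarrow> w \<notin> \<Union>S \<Longrightarrow> w \<noteq> A \<Longrightarrow> w \<noteq> B \<Longrightarrow> w \<noteq> C \<Longrightarrow> w \<noteq> D \<Longrightarrow>
        ({w,A} \<in> E \<or> {w,B} \<in> E) \<and> ({w,C} \<in> E \<or> {w,D} \<in> E)"
    using c unfolding cfg_def by blast+
  have AB: "{A,B} \<in> M" using p_M[OF V(1)] pa by simp
  have pb: "p B = A" using pswap[OF V(1) pa] .
  show ?thesis
  proof (cases "p C = D")
    case True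
    then have CD: "{C,D} \<in> M" using p_M[OF V(3)] by simp
    show ?thesis
      by (rule swap2[of A B C D]) (use AB CD S u ed dist in \<open>simp_all add: neq2 notS\<close>)
  next
    case False
    define y where "y = p C"
    define z where "z = p D"
    have pd: "p D \<noteq> C" using False pswap[OF V(4), of C] by blast
    have yV: "y \<in> V" "z \<in> V" using p_V V y_def z_def by auto
    have yu: "y \<notin> \<Union>S" "z \<notin> \<Union>S" using unc_p S V u y_def z_def by auto
    have yd: "y \<noteq> A" "y \<noteq> B" "y \<noteq> C" "y \<noteq> D" 
      using False pswap[OF V(3), of A] pswap[OF V(3), of B] pa pb p_neq[OF V(3)] dist y_def by auto
    have zd: "z \<noteq> A" "z \<noteq> B" "z \<noteq> C" "z \<noteq> D"
      using pd pswap[OF V(4), of A] pswap[OF V(4), of B] pa pb p_neq[OF V(4)] dist z_def by auto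
    have yz: "y \<noteq> z" using p_inj[OF V(3) V(4)] dist y_def z_def by blast
    have Cy: "{y,C} \<in> M" using p_M'[OF V(3)] y_def by simp
    have Dz: "{z,D} \<in> M" using p_M'[OF V(4)] z_def by simp
    have dy: "({y,A} \<in> E \<or> {y,B} \<in> E)" using dom[OF yV(1) yu(1) yd] by blast
    have dz: "({z,A} \<in> E \<or> {z,B} \<in> E)" using dom[OF yV(2) yu(2) zd] by blast
    show ?thesis
    proof (cases "{z,A} \<in> E")
      case True
      show ?thesis
        by (rule swap2[of A B z D]) (use AB Dz S u yu ed dist zd True in \<open>simp_all add: neq2 notS insert_commute\<close>)
    next
      case zA: False
      show ?thesis
      proof (cases "{y,B} \<in> E")
        case True
        show ?thesis
          by (rule swap2[of B A y C]) (use AB Cy S u yu ed dist yd True in \<open>simp_all add: neq2 notS insert_commute\<close>)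
      next
        case False
        then have "{y,A} \<in> E" "{z,B} \<in> E" using dy dz zA by blast+
        then show ?thesis
          by (intro swap3[of A B z D C y]) (use AB Cy Dz S u yu ed dist yd zd yz in \<open>simp_all add: neq2 notS insert_commute\<close>)
      qed
    qed
  qed
qed

lemma core_II:
  assumes c: "cfg S A B C D" and pa: "p A = C"
  shows "altex S"
proof -
  have S: "S \<subseteq> M" and V: "A \<in> V" "B \<in> V" "C \<in> V" "D \<in> V"
    and dist: "A \<noteq> B" "A \<noteq> C" "A \<noteq> D" "B \<noteq> C" "B \<noteq> D" "C \<noteq> D"
    and u: "A \<notin> \<Union>S" "B \<notin> \<Union>S" "C \<notin> \<Union>S" "D \<notin> \<Union>S"
    and ed: "{A,B} \<in> E" "{C,D} \<in> E" "{A,C} \<in> E" "{B,D} \<in> E"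
    and dom: "\<And>w. w\<in>V \<Longrightarrow> w \<notin> \<Union>S \<Longrightarrow> w \<noteq> A \<Longrightarrow> w \<noteq> B \<Longrightarrow> w \<noteq> C \<Longrightarrow> w \<noteq> D \<Longrightarrow>
        ({w,A} \<in> E \<or> {w,B} \<in> E) \<and> ({w,C} \<in> E \<or> {w,D} \<in> E)"
    using c unfolding cfg_def by blast+
  have AC: "{A,C} \<in> M" using p_M[OF V(1)] pa by simp
  have pc: "p C = A" using pswap[OF V(1) pa] .
  show ?thesis
  proof (cases "p B = D")
    case True
    then have BD: "{B,D} \<in> M" using p_M[OF V(2)] by simp
    show ?thesis
      by (rule swap2[of A C B D]) (use AC BD S u ed dist in \<open>simp_all add: neq2 notS\<close>)
  next
    case False
    define y where "y = p B"
    define z where "z = p D"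
    have pd: "p D \<noteq> B" using False pswap[OF V(4), of B] by blast
    have yV: "y \<in> V" "z \<in> V" using p_V V y_def z_def by auto
    have yu: "y \<notin> \<Union>S" "z \<notin> \<Union>S" using unc_p S V u y_def z_def by auto
    have yd: "y \<noteq> A" "y \<noteq> B" "y \<noteq> C" "y \<noteq> D" 
      using False pswap[OF V(2), of A] pswap[OF V(2), of C] pa pc p_neq[OF V(2)] dist y_def by auto
    have zd: "z \<noteq> A" "z \<noteq> B" "z \<noteq> C" "z \<noteq> D"
      using pd pswap[OF V(4), of A] pswap[OF V(4), of C] pa pc p_neq[OF V(4)] dist z_def by auto
    have yz: "y \<noteq> z" using p_inj[OF V(2) V(4)] dist y_def z_def by blast
    have By: "{B,y} \<in> M" using p_M[OF V(2)] y_def by simp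
    have Dz: "{z,D} \<in> M" using p_M'[OF V(4)] z_def by simp
    have dy: "({y,C} \<in> E \<or> {y,D} \<in> E)" using dom[OF yV(1) yu(1) yd] by blast
    have dz: "({z,A} \<in> E \<or> {z,B} \<in> E)" using dom[OF yV(2) yu(2) zd] by blast
    show ?thesis
    proof (cases "{z,A} \<in> E")
      case True
      show ?thesis
        by (rule swap2[of A C z D]) (use AC Dz S u yu ed dist zd True in \<open>simp_all add: neq2 notS insert_commute\<close>)
    next
      case zA: False
      show ?thesis
      proof (cases "{y,C} \<in> E")
        case True
        show ?thesis
          by (rule swap2[of C A y B]) (use AC By S u yu ed dist yd True in \<open>simp_all add: neq2 notS insert_commute\<close>)
      next
        case False
        then have "{y,D} \<in> E" "{z,B} \<in> E" using dy dz zA by blast+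
        then show ?thesis
          by (intro swap2[of B y z D]) (use By Dz S u yu ed dist yd zd yz in \<open>simp_all add: neq2 notS insert_commute\<close>)
      qed
    qed
  qed
qed

lemma core_III:
  assumes c: "cfg S A B C D" and pa: "p A = D"
  shows "altex S"
proof -
  have S: "S \<subseteq> M" and V: "A \<in> V" "B \<in> V" "C \<in> V" "D \<in> V"
    and dist: "A \<noteq> B" "A \<noteq> C" "A \<noteq> D" "B \<noteq> C" "B \<noteq> D" "C \<noteq> D"
    and u: "A \<notin> \<Union>S" "B \<notin> \<Union>S" "C \<notin> \<Union>S" "D \<notin> \<Union>S"
    and ed: "{A,B} \<in> E" "{C,D} \<in> E" "{A,C} \<in> E" "{B,D} \<in> E"
    and dom: "\<And>w. w\<in>V \<Longrightarrow> w \<notin> \<Union>S \<Longrightarrow> w \<noteq> A \<Longrightarrow> w \<noteq> B \<Longrightarrow> w \<noteq> C \<Longrightarrow> w \<noteq> D \<Longrightarrow>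
        ({w,A} \<in> E \<or> {w,B} \<in> E) \<and> ({w,C} \<in> E \<or> {w,D} \<in> E)"
    using c unfolding cfg_def by blast+
  have AD: "{A,D} \<in> M" using p_M[OF V(1)] pa by simp
  have pd: "p D = A" using pswap[OF V(1) pa] .
  show ?thesis
  proof (cases "p B = C")
    case True
    then have BC: "{B,C} \<in> M" using p_M[OF V(2)] by simp
    show ?thesis
      by (rule swap2[of A D B C]) (use AD BC S u ed dist in \<open>simp_all add: neq2 notS insert_commute\<close>)
  next
    case False
    define y where "y = p B"
    define z where "z = p C"
    have pc: "p C \<noteq> B" using False pswap[OF V(3), of B] by blast
    have yV: "y \<in> V" "z \<in> V" using p_V V y_def z_def by auto
    have yu: "y \<notin> \<Union>S" "z \<notin> \<Union>S" using unc_p S V u y_def z_def by auto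
    have yd: "y \<noteq> A" "y \<noteq> B" "y \<noteq> C" "y \<noteq> D" 
      using False pswap[OF V(2), of A] pswap[OF V(2), of D] pa pd p_neq[OF V(2)] dist y_def by auto
    have zd: "z \<noteq> A" "z \<noteq> B" "z \<noteq> C" "z \<noteq> D"
      using pc pswap[OF V(3), of A] pswap[OF V(3), of D] pa pd p_neq[OF V(3)] dist z_def by auto
    have yz: "y \<noteq> z" using p_inj[OF V(2) V(3)] dist y_def z_def by blast
    have By: "{B,y} \<in> M" using p_M[OF V(2)] y_def by simp
    have Cz: "{z,C} \<in> M" using p_M'[OF V(3)] z_def by simp
    have dy: "({y,C} \<in> E \<or> {y,D} \<in> E)" using dom[OF yV(1) yu(1) yd] by blast
    have dz: "({z,A} \<in> E \<or> {z,B} \<in> E)" using dom[OF yV(2) yu(2) zd] by blast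
    show ?thesis
    proof (cases "{y,D} \<in> E")
      case True
      show ?thesis
        by (rule swap2[of D A y B]) (use AD By S u yu ed dist yd True in \<open>simp_all add: neq2 notS insert_commute\<close>)
    next
      case yD: False
      show ?thesis
      proof (cases "{z,A} \<in> E")
        case True
        show ?thesis
          by (rule swap2[of A D z C]) (use AD Cz S u yu ed dist zd True in \<open>simp_all add: neq2 notS insert_commute\<close>)
      next
        case False
        then have "{y,C} \<in> E" "{z,B} \<in> E" using dy dz yD by blast+
        then show ?thesis
          by (intro swap2[of B y z C]) (use By Cz S u yu ed dist yd zd yz in \<open>simp_all add: neq2 notS insert_commute\<close>)
      qed
    qed
  qed
qed

end


context pmctx begin

lemma core_V:
  assumes c: "cfg S A B C D" and pa: "p A \<notin> {B,C,D}" and pb: "p B \<notin> {A,C,D}"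
    and pc: "p C \<notin> {A,B,D}" and pd: "p D \<notin> {A,B,C}"
  shows "altex S"
proof -
  have S: "S \<subseteq> M" and V: "A \<in> V" "B \<in> V" "C \<in> V" "D \<in> V"
    and dist: "A \<noteq> B" "A \<noteq> C" "A \<noteq> D" "B \<noteq> C" "B \<noteq> D" "C \<noteq> D"
    and u: "A \<notin> \<Union>S" "B \<notin> \<Union>S" "C \<notin> \<Union>S" "D \<notin> \<Union>S"
    and ed: "{A,B} \<in> E" "{C,D} \<in> E" "{A,C} \<in> E" "{B,D} \<in> E"
    and dom: "\<And>w. w\<in>V \<Longrightarrow> w \<notin> \<Union>S \<Longrightarrow> w \<noteq> A \<Longrightarrow> w \<noteq> B \<Longrightarrow> w \<noteq> C \<Longrightarrow> w \<noteq> D \<Longrightarrow>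
        ({w,A} \<in> E \<or> {w,B} \<in> E) \<and> ({w,C} \<in> E \<or> {w,D} \<in> E)"
    using c unfolding cfg_def by blast+
  define a where "a = p A"
  define b where "b = p B"
  define c' where "c' = p C"
  define d where "d = p D"
  have pV: "a \<in> V" "b \<in> V" "c' \<in> V" "d \<in> V" using p_V V a_def b_def c'_def d_def by auto
  have pu: "a \<notin> \<Union>S" "b \<notin> \<Union>S" "c' \<notin> \<Union>S" "d \<notin> \<Union>S"
    using unc_p S V u a_def b_def c'_def d_def by auto
  have na: "a \<noteq> A" "a \<noteq> B" "a \<noteq> C" "a \<noteq> D" using pa p_neq[OF V(1)] a_def by auto
  have nb: "b \<noteq> A" "b \<noteq> B" "b \<noteq> C" "b \<noteq> D" using pb p_neq[OF V(2)] b_def by auto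
  have nc: "c' \<noteq> A" "c' \<noteq> B" "c' \<noteq> C" "c' \<noteq> D" using pc p_neq[OF V(3)] c'_def by auto
  have nd: "d \<noteq> A" "d \<noteq> B" "d \<noteq> C" "d \<noteq> D" using pd p_neq[OF V(4)] d_def by auto
  have pdist: "a \<noteq> b" "a \<noteq> c'" "a \<noteq> d" "b \<noteq> c'" "b \<noteq> d" "c' \<noteq> d"
    using p_inj V dist a_def b_def c'_def d_def by metis+
  have eM: "{A,a} \<in> M" "{B,b} \<in> M" "{C,c'} \<in> M" "{D,d} \<in> M"
    using p_M V a_def b_def c'_def d_def by auto
  have eM': "{a,A} \<in> M" "{b,B} \<in> M" "{c',C} \<in> M" "{d,D} \<in> M"
    using eM by (simp_all add: insert_commute)
  have da: "{a,C} \<in> E \<or> {a,D} \<in> E" using dom[OF pV(1) pu(1) na] by blast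
  have db: "{b,C} \<in> E \<or> {b,D} \<in> E" using dom[OF pV(2) pu(2) nb] by blast
  have dc: "{c',A} \<in> E \<or> {c',B} \<in> E" using dom[OF pV(3) pu(3) nc] by blast
  have dd: "{d,A} \<in> E \<or> {d,B} \<in> E" using dom[OF pV(4) pu(4) nd] by blast
  note facts = eM eM' S u pu dist pdist na nb nc nd
  have two: "altex S" if "{x', Y} \<in> E" "{y', X} \<in> E" "{x',X} \<in> M" "{Y,y'} \<in> M"
     "x' \<notin> \<Union>S" "y' \<notin> \<Union>S" "X \<notin> \<Union>S" "Y \<notin> \<Union>S" "X \<noteq> Y" "X \<noteq> y'" for x' X Y y'
    by (rule swap2[of x' X Y y']) (use that S in \<open>simp_all add: neq2 notS notS' insert_commute\<close>)
  show ?thesis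
  proof (cases "{a,C} \<in> E")
    case aC: True
    show ?thesis
    proof (cases "{c',A} \<in> E")
      case True
      then show ?thesis using two[of a C c' A] aC facts by auto
    next
      case False
      then have cB: "{c',B} \<in> E" using dc by blast
      show ?thesis
      proof (cases "{b,C} \<in> E")
        case True
        then show ?thesis using two[of b C c' B] cB facts by auto
      next
        case False
        then have bD: "{b,D} \<in> E" using db by blast
        show ?thesis
        proof (cases "{d,A} \<in> E")
          case True
          show ?thesis
            by (rule swap4[of A a C c' B b D d]) (use aC cB bD True facts in \<open>simp_all add: neq2 notS insert_commute\<close>)
        next
          case False
          then have "{d,B} \<in> E" using dd by blast
          then show ?thesis using two[of b D d B] bD facts by auto
        qed
      qed
    qed
  next
    case False
    then have aD: "{a,D} \<in> E" using da by blast
    show ?thesis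
    proof (cases "{d,A} \<in> E")
      case True
      then show ?thesis using two[of a D d A] aD facts by auto
    next
      case False
      then have dB: "{d,B} \<in> E" using dd by blast
      show ?thesis
      proof (cases "{b,D} \<in> E")
        case True
        then show ?thesis using two[of b D d B] dB facts by auto
      next
        case False
        then have bC: "{b,C} \<in> E" using db by blast
        show ?thesis
        proof (cases "{c',A} \<in> E")
          case True
          show ?thesis
            by (rule swap4[of A a D d B b C c']) (use aD dB bC True facts in \<open>simp_all add: neq2 notS insert_commute\<close>)
        next
          case False
          then have "{c',B} \<in> E" using dc by blast
          then show ?thesis using two[of b C c' B] bC facts by auto
        qed
      qed
    qed
  qed
qed

lemma lemmaC:
  assumes c: "cfg S A B C D"
  shows "altex S"
proof -
  have V: "A \<in> V" "B \<in> V" "C \<in> V" "D \<in> V" using c unfolding cfg_def by blast+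
  show ?thesis
  proof (cases "p A \<in> {B,C,D}")
    case True
    then show ?thesis using core_I core_II core_III c by blast
  next
    case nA: False
    show ?thesis
    proof (cases "p B \<in> {A,C,D}")
      case True
      then have "p B \<in> {A,D,C}" by blast
      then show ?thesis using core_I core_II core_III cfg_sym1[OF c] by blast
    next
      case nB: False
      show ?thesis
      proof (cases "p C \<in> {A,B,D}")
        case True
        then have "p C = D" using nA nB pswap V by blast
        then show ?thesis using core_I cfg_sym2[OF c] by blast
      next
        case nC: False
        have "p D \<notin> {A,B,C}" using nA nB nC pswap V by blast
        then show ?thesis using core_V c nA nB nC by blast
      qed
    qed
  qed
qed

end



definition altM :: "'a set set \<Rightarrow> 'a set set \<Rightarrow> bool" where
  "altM E M0 \<longleftrightarrow> (\<forall>a b c d. {a,b} \<in> M0 \<longrightarrow> {c,d} \<in> M0 \<longrightarrow> {a,b} \<noteq> {c,d} \<longrightarrow>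
      ({a,c} \<in> E \<and> {b,d} \<in> E) \<or> ({a,d} \<in> E \<and> {b,c} \<in> E))"

lemma forcing_not_altex:
  assumes "simple_graph V E" "perfect_matching V E M" "forcing_set V E M S"
  shows "\<not> pmctx.altex V E M S"
proof -
  interpret pmctx V E M using assms(1,2) by unfold_locales
  show ?thesis using assms(3) unfolding altex_def forcing_set_def by blast
qed

lemma L1:
  assumes sg: "simple_graph V E" and pm: "perfect_matching V E M" and pm0: "perfect_matching V E M0"
    and alt: "altM E M0" and fs: "forcing_set V E M S"
    and e: "e1 \<in> M0" "e2 \<in> M0" "e1 \<inter> \<Union>S = {}" "e2 \<inter> \<Union>S = {}"
  shows "e1 = e2"
proof (rule ccontr)
  assume ne: "e1 \<noteq> e2"
  interpret pmctx V E M using sg pm by unfold_locales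
  interpret P0: pmctx V E M0 using sg pm0 by unfold_locales
  have SM: "S \<subseteq> M" using fs unfolding forcing_set_def by blast
  obtain A B where AB: "e1 = {A,B}" "A \<noteq> B" "A \<in> V" "B \<in> V" using e(1) P0.ME edgeE by blast
  obtain C0 D0 where CD0: "e2 = {C0,D0}" "C0 \<noteq> D0" "C0 \<in> V" "D0 \<in> V" using e(2) P0.ME edgeE by blast
  have m1: "{A,B} \<in> M0" using e(1) AB(1) by simp
  have m2: "{C0,D0} \<in> M0" using e(2) CD0(1) by simp
  have n12: "{A,B} \<noteq> {C0,D0}" using ne AB(1) CD0(1) by simp
  have dj: "A \<noteq> C0 \<and> A \<noteq> D0 \<and> B \<noteq> C0 \<and> B \<noteq> D0"
    using P0.Mdisj[OF m1 m2 n12] .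
  have a0: "({A,C0} \<in> E \<and> {B,D0} \<in> E) \<or> ({A,D0} \<in> E \<and> {B,C0} \<in> E)"
    using alt m1 m2 n12 unfolding altM_def by blast
  obtain C D where CD: "{C,D} = e2" "{A,C} \<in> E" "{B,D} \<in> E" "C \<noteq> D" "C \<in> V" "D \<in> V"
    "A \<noteq> C \<and> A \<noteq> D \<and> B \<noteq> C \<and> B \<noteq> D"
  proof (cases "{A,C0} \<in> E \<and> {B,D0} \<in> E")
    case True then show ?thesis using that[of C0 D0] CD0 dj by simp
  next
    case False then have "{A,D0} \<in> E \<and> {B,C0} \<in> E" using a0 by blast
    moreover have "{D0,C0} = e2" using CD0(1) by (simp add: insert_commute)
    ultimately show ?thesis using that[of D0 C0] CD0 dj by simp
  qed
  have dom: "({w,A} \<in> E \<or> {w,B} \<in> E) \<and> ({w,C} \<in> E \<or> {w,D} \<in> E)"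
    if "w \<in> V" "w \<noteq> A" "w \<noteq> B" "w \<noteq> C" "w \<noteq> D" for w
  proof -
    have wM: "{w, P0.p w} \<in> M0" using P0.p_M that(1) .
    have n1: "{w, P0.p w} \<noteq> {A,B}" using that by auto
    have n2: "{w, P0.p w} \<noteq> {C,D}" using that by auto
    have "({w,A} \<in> E \<and> {P0.p w,B} \<in> E) \<or> ({w,B} \<in> E \<and> {P0.p w,A} \<in> E)"
      using alt wM e(1) AB(1) n1 unfolding altM_def by blast
    moreover have "({w,C} \<in> E \<and> {P0.p w,D} \<in> E) \<or> ({w,D} \<in> E \<and> {P0.p w,C} \<in> E)"
      using alt wM e(2) CD(1) n2 unfolding altM_def by blast
    ultimately show ?thesis by blast
  qed
  have uA: "A \<notin> \<Union>S" "B \<notin> \<Union>S" using e(3) AB(1) by auto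
  have uC: "C \<notin> \<Union>S" "D \<notin> \<Union>S" using e(4) CD(1) by auto
  have eAB: "{A,B} \<in> E" using m1 P0.ME by blast
  have eCD: "{C,D} \<in> E" using e(2) CD(1) P0.ME by blast
  have "cfg S A B C D"
    unfolding cfg_def using SM AB CD uA uC eAB eCD dom by auto
  then have "altex S" by (rule lemmaC)
  then show False using forcing_not_altex[OF sg pm fs] by blast
qed




context pmctx begin

lemma finE: "finite E"
proof -
  have "E \<subseteq> Pow V" using edgeE by blast
  then show ?thesis using finV finite_subset by blast
qed

lemma finM: "finite M" using finE ME finite_subset by blast

lemma card_edge: "e \<in> M \<Longrightarrow> card e = 2"
  using ME edgeE by fastforce

lemma card_Union_sub: "S \<subseteq> M \<Longrightarrow> card (\<Union>S) = 2 * card S"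
proof -
  assume S: "S \<subseteq> M"
  have "pairwise disjnt S"
    unfolding pairwise_def disjnt_def using S M_unique by blast
  moreover have "\<And>A. A \<in> S \<Longrightarrow> finite A" using S card_edge card.infinite by fastforce
  ultimately have "card (\<Union>S) = sum card S" by (rule card_Union_disjoint)
  also have "\<dots> = sum (\<lambda>_. 2) S" using S card_edge by (intro sum.cong) auto
  also have "\<dots> = 2 * card S" by simp
  finally show ?thesis .
qed

lemma Union_M: "\<Union>M = V"
  using pm ME edge_in_V unfolding perfect_matching_def by blast

lemma card_V: "card V = 2 * card M"
  using card_Union_sub[of M] Union_M by simp

lemma pm_sub_eq: "perfect_matching V E M' \<Longrightarrow> M \<subseteq> M' \<Longrightarrow> M' = M"
proof -
  assume pm': "perfect_matching V E M'" and sub: "M \<subseteq> M'"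
  interpret P': pmctx V E M' using sg pm' by unfold_locales
  show "M' = M"
  proof
    show "M' \<subseteq> M"
    proof
      fix e assume e: "e \<in> M'"
      then obtain u v where "e = {u,v}" "u \<in> V" using P'.ME edgeE by blast
      then have "{u, p u} \<in> M'" "u \<in> e" "u \<in> {u, p u}" using p_M sub by auto
      then have "e = {u, p u}" using P'.M_unique e by blast
      then show "e \<in> M" using p_M \<open>u \<in> V\<close> by simp
    qed
  qed (rule sub)
qed

lemma M_forcing: "forcing_set V E M M"
  unfolding forcing_set_def using pm_sub_eq by blast

lemma fn_le: "forcing_set V E M S \<Longrightarrow> forcing_number V E M \<le> card S"
proof -
  assume fs: "forcing_set V E M S"
  have "{card S | S. forcing_set V E M S} \<subseteq> {..card M}"
    using finM unfolding forcing_set_def by (auto intro: card_mono)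
  then have "finite {card S | S. forcing_set V E M S}" using finite_subset by blast
  then show ?thesis unfolding forcing_number_def using fs by (auto intro: Min_le)
qed

lemma fn_ex: "\<exists>S. forcing_set V E M S \<and> forcing_number V E M = card S"
proof -
  have "{card S | S. forcing_set V E M S} \<subseteq> {..card M}"
    using finM unfolding forcing_set_def by (auto intro: card_mono)
  then have f: "finite {card S | S. forcing_set V E M S}" using finite_subset by blast
  have "{card S | S. forcing_set V E M S} \<noteq> {}" using M_forcing by blast
  then have "forcing_number V E M \<in> {card S | S. forcing_set V E M S}"
    unfolding forcing_number_def using f Min_in by blast
  then show ?thesis by blast
qed

lemma fs_sub: "forcing_set V E M S \<Longrightarrow> S \<subseteq> M" unfolding forcing_set_def by blast

lemma fn_upper:
  assumes "card V = 2 * n" "n \<ge> 1"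
  shows "forcing_number V E M \<le> n - 1"
proof -
  have cM: "card M = n" using card_V assms by simp
  then obtain e where e: "e \<in> M" using assms by (metis card.empty ex_in_conv not_one_le_zero)
  have "forcing_set V E M (M - {e})"
    unfolding forcing_set_def
  proof (intro conjI allI impI)
    fix M' assume a: "perfect_matching V E M' \<and> M - {e} \<subseteq> M'"
    interpret P': pmctx V E M' using sg a by unfold_locales blast+
    have "M \<subseteq> M'"
    proof
      fix f assume f: "f \<in> M"
      show "f \<in> M'"
      proof (cases "f = e")
        case False then show ?thesis using a f by blast
      next
        case True
        obtain u v where uv: "e = {u,v}" "u \<noteq> v" "u \<in> V" "v \<in> V" using e ME edgeE by blast
        define w where "w = P'.p u"
        have uw: "{u,w} \<in> M'" using P'.p_M uv w_def by simp
        have wV: "w \<in> V" using P'.p_V uv w_def by simp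
        have "w = v"
        proof (rule ccontr)
          assume wv: "w \<noteq> v"
          have wu: "w \<noteq> u" using P'.p_neq uv w_def by simp
          have "{w, p w} \<in> M" using p_M wV .
          moreover have "{w, p w} \<noteq> e" using wv wu uv by auto
          ultimately have "{w, p w} \<in> M'" using a by blast
          then have "{w, p w} = {u,w}" using uw P'.M_unique by blast
          then have "{w, p w} \<in> M" "u \<in> {w, p w}" using p_M[OF wV] by (simp, blast)
          then have "{w, p w} = e" using e uv M_unique by blast
          then show False using \<open>{w, p w} \<noteq> e\<close> by blast
        qed
        then show ?thesis using True uw uv by simp
      qed
    qed
    then show "M' = M" using pm_sub_eq a by blast
  qed auto
  then have "forcing_number V E M \<le> card (M - {e})" by (rule fn_le)
  also have "\<dots> = n - 1" using cM e finM by simp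
  finally show ?thesis .
qed

end

lemma pms_finite: "simple_graph V E \<Longrightarrow> finite {M. perfect_matching V E M}"
proof -
  assume sg: "simple_graph V E"
  have "{M. perfect_matching V E M} \<subseteq> Pow E" unfolding perfect_matching_def by blast
  moreover have "finite E"
  proof -
    have "E \<subseteq> Pow V"
    proof
      fix e assume "e \<in> E"
      then obtain u v where "e = {u,v}" "u \<in> V" "v \<in> V" using sg unfolding simple_graph_def by blast
      then show "e \<in> Pow V" by simp
    qed
    moreover have "finite V" using sg by (simp add: simple_graph_def)
    ultimately show ?thesis using finite_subset by blast
  qed
  ultimately show ?thesis using finite_subset by blast
qed

lemma fset_finite: "simple_graph V E \<Longrightarrow> finite {forcing_number V E M | M. perfect_matching V E M}"
proof -
  assume "simple_graph V E"
  then have "finite (forcing_number V E ` {M. perfect_matching V E M})" using pms_finite by blast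
  moreover have "{forcing_number V E M | M. perfect_matching V E M} = forcing_number V E ` {M. perfect_matching V E M}" by blast
  ultimately show ?thesis by simp
qed

lemma min_le: "simple_graph V E \<Longrightarrow> perfect_matching V E M \<Longrightarrow> min_forcing_number V E \<le> forcing_number V E M"
  unfolding min_forcing_number_def using fset_finite by (auto intro: Min_le)

lemma max_ge: "simple_graph V E \<Longrightarrow> perfect_matching V E M \<Longrightarrow> forcing_number V E M \<le> max_forcing_number V E"
  unfolding max_forcing_number_def using fset_finite by (auto intro: Max_ge)

lemma min_ex: "simple_graph V E \<Longrightarrow> perfect_matching V E M \<Longrightarrow> \<exists>M. perfect_matching V E M \<and> min_forcing_number V E = forcing_number V E M"
proof -
  assume "simple_graph V E" "perfect_matching V E M"
  then have "min_forcing_number V E \<in> {forcing_number V E M | M. perfect_matching V E M}"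
    unfolding min_forcing_number_def using fset_finite by (intro Min_in) auto
  then show ?thesis by blast
qed

lemma max_ex: "simple_graph V E \<Longrightarrow> perfect_matching V E M \<Longrightarrow> \<exists>M. perfect_matching V E M \<and> max_forcing_number V E = forcing_number V E M"
proof -
  assume "simple_graph V E" "perfect_matching V E M"
  then have "max_forcing_number V E \<in> {forcing_number V E M | M. perfect_matching V E M}"
    unfolding max_forcing_number_def using fset_finite by (intro Max_in) auto
  then show ?thesis by blast
qed




context pmctx begin
lemma partner_in:
  assumes S: "S \<subseteq> M" and cov: "\<forall>v\<in>V. v \<notin> X \<longrightarrow> v \<in> \<Union>S"
    and x: "x \<notin> \<Union>S" and xy: "{x,y} \<in> M"
  shows "y \<in> X"
proof (rule ccontr)
  assume "y \<notin> X"
  moreover have "y \<in> V" using xy M_edge by blast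
  ultimately obtain s where s: "s \<in> S" "y \<in> s" using cov by blast
  then have "s = {x,y}" using S xy M_unique by blast
  then show False using x s by blast
qed
end

lemma lemmaK:
  assumes sg: "simple_graph V E" and pm0: "perfect_matching V E M0"
    and cV: "card V = 2 * n" and fn: "forcing_number V E M0 = n - 1"
  shows "altM E M0"
  unfolding altM_def
proof (intro allI impI)
  fix a b c d
  assume ab: "{a,b} \<in> M0" and cd: "{c,d} \<in> M0" and ne: "{a,b} \<noteq> {c,d}"
  interpret P0: pmctx V E M0 using sg pm0 by unfold_locales
  show "({a,c} \<in> E \<and> {b,d} \<in> E) \<or> ({a,d} \<in> E \<and> {b,c} \<in> E)"
  proof (rule ccontr)
    assume nalt: "\<not> (({a,c} \<in> E \<and> {b,d} \<in> E) \<or> ({a,d} \<in> E \<and> {b,c} \<in> E))"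
    have dab: "a \<noteq> b" "c \<noteq> d" using ab cd P0.M_edge by blast+
    have dj: "a \<noteq> c \<and> a \<noteq> d \<and> b \<noteq> c \<and> b \<noteq> d" using P0.Mdisj[OF ab cd ne] .
    have aV: "a \<in> V" "b \<in> V" "c \<in> V" "d \<in> V" using ab cd P0.M_edge by blast+
    define S where "S = M0 - {{a,b},{c,d}}"
    have SM: "S \<subseteq> M0" unfolding S_def by blast
    have unc: "x \<notin> \<Union>S" if "x \<in> {a,b,c,d}" for x
    proof
      assume "x \<in> \<Union>S"
      then obtain s where s: "s \<in> S" "x \<in> s" by blast
      have "x \<in> {a,b} \<or> x \<in> {c,d}" using that by blast
      then have "s = {a,b} \<or> s = {c,d}" using P0.M_unique s SM ab cd by blast
      then show False using s unfolding S_def by blast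
    qed
    have cov: "\<forall>v\<in>V. v \<notin> {a,b,c,d} \<longrightarrow> v \<in> \<Union>S"
    proof (intro ballI impI)
      fix v assume v: "v \<in> V" "v \<notin> {a,b,c,d}"
      have "{v, P0.p v} \<in> M0" using P0.p_M v(1) .
      moreover have "{v, P0.p v} \<noteq> {a,b}" "{v, P0.p v} \<noteq> {c,d}" using v(2) by auto
      ultimately have "{v, P0.p v} \<in> S" unfolding S_def by blast
      then show "v \<in> \<Union>S" by blast
    qed
    have fs: "forcing_set V E M0 S"
      unfolding forcing_set_def
    proof (intro conjI allI impI)
      show "S \<subseteq> M0" by (rule SM)
      fix M' assume a: "perfect_matching V E M' \<and> S \<subseteq> M'"
      interpret P': pmctx V E M' using sg a by unfold_locales blast+
      have SM': "S \<subseteq> M'" using a by blast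
      have pin: "P'.p x \<in> {a,b,c,d}" if "x \<in> {a,b,c,d}" for x
      proof -
        have "x \<in> V" using that aV by blast
        then show ?thesis using P'.partner_in[OF SM' cov unc[OF that]] P'.p_M by blast
      qed
      have q: "{x, P'.p x} \<in> M'" "P'.p x \<noteq> x" if "x \<in> {a,b,c,d}" for x
        using that aV P'.p_M P'.p_neq by blast+
      have pab: "P'.p a = b \<and> P'.p c = d"
      proof -
        have qa: "P'.p a \<in> {b,c,d}" using pin[of a] q(2)[of a] by blast
        have qb: "P'.p b \<in> {a,c,d}" using pin[of b] q(2)[of b] by blast
        have sa: "P'.p (P'.p a) = a" "P'.p (P'.p b) = b" "P'.p (P'.p c) = c"
          using P'.pp aV by blast+
        show ?thesis
        proof (cases "P'.p a = b")
          case True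
          have qc: "P'.p c \<in> {a,b,d}" using pin[of c] q(2)[of c] by blast
          have "P'.p c \<noteq> a" using True sa dj by metis
          moreover have "P'.p c \<noteq> b" using True sa dj dab by metis
          ultimately show ?thesis using True qc by blast
        next
          case False
          show ?thesis
          proof (cases "P'.p a = c")
            case True
            have "P'.p b \<noteq> a" using sa dab False by metis
            moreover have "P'.p b \<noteq> c" using True sa dj dab by metis
            ultimately have "P'.p b = d" using qb by blast
            then have "{a,c} \<in> E" "{b,d} \<in> E" using True q[of a] q[of b] P'.ME by auto
            then show ?thesis using nalt by blast
          next
            case F2: False
            then have pad: "P'.p a = d" using qa False by blast
            have "P'.p b \<noteq> a" using sa dab False by metis
            moreover have "P'.p b \<noteq> d" using pad sa dj dab by metis
            ultimately have "P'.p b = c" using qb by blast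
            then have "{a,d} \<in> E" "{b,c} \<in> E" using pad q[of a] q[of b] P'.ME by auto
            then show ?thesis using nalt by blast
          qed
        qed
      qed
      have "M0 \<subseteq> M'"
      proof
        fix e assume e: "e \<in> M0"
        show "e \<in> M'"
        proof (cases "e \<in> S")
          case True then show ?thesis using SM' by blast
        next
          case False
          then have "e = {a,b} \<or> e = {c,d}" using e unfolding S_def by blast
          then show ?thesis using pab q[of a] q[of c] by auto
        qed
      qed
      then show "M' = M0" using P0.pm_sub_eq a by blast
    qed
    have cM: "card M0 = n" using P0.card_V cV by simp
    have "card S = n - 2" unfolding S_def using cM ab cd ne P0.finM by (simp add: card_Diff_subset)
    moreover have "card {{a,b},{c,d}} = 2" using ne by simp
    moreover have "{{a,b},{c,d}} \<subseteq> M0" using ab cd by simp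
    ultimately have "n \<ge> 2" using cM P0.finM card_mono by metis
    moreover have "forcing_number V E M0 \<le> n - 2" using P0.fn_le[OF fs] \<open>card S = n - 2\<close> by simp
    ultimately show False using fn by simp
  qed
qed

lemma alt_fn:
  assumes sg: "simple_graph V E" and pm0: "perfect_matching V E M0" and alt: "altM E M0"
    and cV: "card V = 2 * n" and fs: "forcing_set V E M0 S"
  shows "n - 1 \<le> card S"
proof -
  interpret P0: pmctx V E M0 using sg pm0 by unfold_locales
  have SM: "S \<subseteq> M0" using fs unfolding forcing_set_def by blast
  have dis: "e \<inter> \<Union>S = {}" if "e \<in> M0 - S" for e
  proof -
    have "e \<inter> s = {}" if "s \<in> S" for s
      using P0.M_unique \<open>e \<in> M0 - S\<close> that SM by blast
    then show ?thesis by blast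
  qed
  have "\<forall>x\<in>M0 - S. \<forall>y\<in>M0 - S. x = y"
    using L1[OF sg pm0 pm0 alt fs] dis by blast
  then have c1: "card (M0 - S) \<le> 1" using P0.finM by (simp add: card_le_Suc0_iff_eq)
  have cM: "card M0 = n" using P0.card_V cV by simp
  have "card M0 = card S + card (M0 - S)"
    using SM P0.finM by (metis card_Diff_subset card_mono finite_subset le_add_diff_inverse)
  then show ?thesis using c1 cM by linarith
qed

lemma alt_fn_M0:
  assumes sg: "simple_graph V E" and pm0: "perfect_matching V E M0" and alt: "altM E M0"
    and cV: "card V = 2 * n"
  shows "n - 1 \<le> forcing_number V E M0"
proof -
  interpret P0: pmctx V E M0 using sg pm0 by unfold_locales
  obtain S where "forcing_set V E M0 S" "forcing_number V E M0 = card S" using P0.fn_ex by blast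
  then show ?thesis using alt_fn[OF sg pm0 alt cV] by simp
qed

lemma part1_bound:
  assumes sg: "simple_graph V E" and pm0: "perfect_matching V E M0" and alt: "altM E M0"
    and cV: "card V = 2 * n" and pm: "perfect_matching V E M" and fs: "forcing_set V E M S"
  shows "n \<le> 2 * card S + 1"
proof -
  interpret P0: pmctx V E M0 using sg pm0 by unfold_locales
  interpret P: pmctx V E M using sg pm by unfold_locales
  have SM: "S \<subseteq> M" using fs unfolding forcing_set_def by blast
  define A where "A = {e\<in>M0. e \<inter> \<Union>S = {}}"
  define B where "B = {e\<in>M0. e \<inter> \<Union>S \<noteq> {}}"
  have aa: "\<forall>x\<in>A. \<forall>y\<in>A. x = y" using L1[OF sg pm pm0 alt fs] unfolding A_def by blast
  have finA: "finite A" using P0.finM unfolding A_def by simp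
  have cA: "card A \<le> Suc 0" using card_le_Suc0_iff_eq[OF finA] aa by blast
  define g where "g e = (SOME x. x \<in> e \<inter> \<Union>S)" for e
  have gB: "g e \<in> e \<inter> \<Union>S" if "e \<in> B" for e
  proof -
    have "\<exists>x. x \<in> e \<inter> \<Union>S" using that unfolding B_def by blast
    then show ?thesis unfolding g_def by (rule someI_ex)
  qed
  have inj: "inj_on g B"
  proof
    fix x y assume "x \<in> B" "y \<in> B" "g x = g y"
    then have "g x \<in> x" "g x \<in> y" "x \<in> M0" "y \<in> M0" using gB[of x] gB[of y] unfolding B_def by auto
    then show "x = y" using P0.M_unique by blast
  qed
  have fU: "finite (\<Union>S)"
    using P.finM SM P.card_edge card.infinite by (metis finite_Union finite_subset zero_neq_numeral subsetD)
  have "card B \<le> card (\<Union>S)"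
    using card_inj_on_le[OF inj _ fU] gB by blast
  also have "\<dots> = 2 * card S" using P.card_Union_sub SM by blast
  finally have cB: "card B \<le> 2 * card S" .
  have "M0 = A \<union> B" unfolding A_def B_def by blast
  then have "card M0 \<le> card A + card B" by (simp add: card_Un_le)
  moreover have "card M0 = n" using P0.card_V cV by simp
  ultimately show ?thesis using cA cB by linarith
qed




definition adjk :: "nat \<Rightarrow> nat \<Rightarrow> nat \<Rightarrow> bool" where
  "adjk k x y \<longleftrightarrow> (if even x = even y then x < 4*k \<and> y < 4*k \<and> x div 4 = y div 4
     else (x div 2 = y div 2 \<or> 4*k \<le> x \<or> 4*k \<le> y \<or> x div 4 \<noteq> y div 4))"

definition Ec :: "nat \<Rightarrow> nat \<Rightarrow> nat set set" where
  "Ec n k = {{x,y} | x y. x < 2*n \<and> y < 2*n \<and> x \<noteq> y \<and> adjk k x y}"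

lemma adjk_sym: "adjk k x y = adjk k y x"
  unfolding adjk_def by auto

lemma memE: "{a,b} \<in> Ec n k \<longleftrightarrow> a < 2*n \<and> b < 2*n \<and> a \<noteq> b \<and> adjk k a b"
proof
  assume "{a,b} \<in> Ec n k"
  then obtain x y where xy: "{a,b} = {x,y}" "x < 2*n" "y < 2*n" "x \<noteq> y" "adjk k x y"
    unfolding Ec_def by blast
  then have "(a = x \<and> b = y) \<or> (a = y \<and> b = x)" by (simp add: doubleton_eq_iff)
  then show "a < 2*n \<and> b < 2*n \<and> a \<noteq> b \<and> adjk k a b" using xy adjk_sym by auto
next
  assume "a < 2*n \<and> b < 2*n \<and> a \<noteq> b \<and> adjk k a b"
  then show "{a,b} \<in> Ec n k" unfolding Ec_def by blast
qed

lemma sg_Ec: "simple_graph {..<2*n} (Ec n k)"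
  unfolding simple_graph_def Ec_def by auto

lemma pm_inv:
  assumes "\<And>x. x \<in> V \<Longrightarrow> f x \<in> V \<and> f x \<noteq> x \<and> f (f x) = x \<and> {x, f x} \<in> E"
  shows "perfect_matching V E {{x, f x} | x. x \<in> V}"
  unfolding perfect_matching_def
proof (intro conjI ballI)
  show "{{x, f x} |x. x \<in> V} \<subseteq> E" using assms by blast
next
  fix v assume v: "v \<in> V"
  have ex: "{v, f v} \<in> {{x, f x} |x. x \<in> V} \<and> v \<in> {v, f v}" using v by blast
  have un: "e = {v, f v}" if h: "e \<in> {{x, f x} |x. x \<in> V}" "v \<in> e" for e
  proof -
    obtain x where x: "e = {x, f x}" "x \<in> V" using h by blast
    then have "v = x \<or> v = f x" using h by blast
    then show ?thesis
    proof
      assume "v = f x" then have "f v = x" using assms x by metis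
      then show ?thesis using x \<open>v = f x\<close> by (simp add: insert_commute)
    qed (use x in simp)
  qed
  show "\<exists>!e. e \<in> {{x, f x} |x. x \<in> V} \<and> v \<in> e"
  proof (rule ex1I[where a="{v, f v}"])
    show "{v, f v} \<in> {{x, f x} |x. x \<in> V} \<and> v \<in> {v, f v}" by (rule ex)
  next
    fix e assume "e \<in> {{x, f x} |x. x \<in> V} \<and> v \<in> e"
    then show "e = {v, f v}" using un by blast
  qed
qed

definition f0 :: "nat \<Rightarrow> nat" where "f0 x = (if even x then x + 1 else x - 1)"
definition M0c :: "nat \<Rightarrow> nat set set" where "M0c n = {{x, f0 x} | x. x \<in> {..<2*n}}"

lemma f0_props: "x < 2*n \<Longrightarrow> f0 x < 2*n \<and> f0 x \<noteq> x \<and> f0 (f0 x) = x \<and> x div 2 = f0 x div 2 \<and> even x \<noteq> even (f0 x)"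
  unfolding f0_def by presburger

lemma f0_basic: "even x \<noteq> even (f0 x) \<and> x div 2 = f0 x div 2"
  unfolding f0_def by presburger

lemma adjk_f0: "adjk k x (f0 x)"
  unfolding adjk_def using f0_basic[of x] by simp

lemma pm_M0: "perfect_matching {..<2*n} (Ec n k) (M0c n)"
  unfolding M0c_def
proof (rule pm_inv)
  fix x assume "x \<in> {..<2*n}"
  then show "f0 x \<in> {..<2*n} \<and> f0 x \<noteq> x \<and> f0 (f0 x) = x \<and> {x, f0 x} \<in> Ec n k"
    using f0_props[of x n] adjk_f0 memE by auto
qed

lemma M0c_form: "e \<in> M0c n \<Longrightarrow> \<exists>i<n. e = {2*i, 2*i+1}"
proof -
  assume "e \<in> M0c n"
  then obtain x where x: "e = {x, f0 x}" "x < 2*n" unfolding M0c_def by blast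
  show ?thesis
  proof (cases "even x")
    case True
    then have "e = {2*(x div 2), 2*(x div 2)+1}" "x div 2 < n" using x unfolding f0_def by auto
    then show ?thesis by blast
  next
    case False
    have h: "f0 x = 2*(x div 2)" "x = 2*(x div 2) + 1" using False unfolding f0_def by presburger+
    have "e = {2*(x div 2), 2*(x div 2)+1}" using x(1) h by (metis insert_commute)
    moreover have "x div 2 < n" using x(2) by presburger
    ultimately show ?thesis by blast
  qed
qed

lemma M0c_mem: "i < n \<Longrightarrow> {2*i, 2*i+1} \<in> M0c n"
proof -
  assume "i < n"
  then have "2*i < 2*n" "f0 (2*i) = 2*i+1" unfolding f0_def by auto
  then show ?thesis unfolding M0c_def by force
qed

lemma altM_sym: "({a,c} \<in> E \<and> {b,d} \<in> E) \<or> ({a,d} \<in> E \<and> {b,c} \<in> E) \<Longrightarrow>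
  {a,b} = {a',b'} \<Longrightarrow> {c,d} = {c',d'} \<Longrightarrow>
  ({a',c'} \<in> E \<and> {b',d'} \<in> E) \<or> ({a',d'} \<in> E \<and> {b',c'} \<in> E)"
  by (auto simp: doubleton_eq_iff insert_commute)

lemma div4a: "(2*i) div 4 = i div (2::nat)" by (simp add: div_mult2_eq[symmetric])
lemma div4b: "(2*i+1) div 4 = i div (2::nat)" by presburger
lemma div2a: "(2*i+1) div 2 = (i::nat)" by presburger
lemma div4c: "Suc (2*i) div 4 = i div (2::nat)" by presburger
lemma div2c: "Suc (2*i) div 2 = (i::nat)" by presburger

lemma alt_ij:
  assumes "i < n" "j < n" "i \<noteq> j"
  shows "({2*i, 2*j} \<in> Ec n k \<and> {2*i+1, 2*j+1} \<in> Ec n k) \<or> ({2*i, 2*j+1} \<in> Ec n k \<and> {2*i+1, 2*j} \<in> Ec n k)"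
proof (cases "i < 2*k \<and> j < 2*k \<and> i div 2 = j div 2")
  case True
  have "adjk k (2*i) (2*j)" "adjk k (2*i+1) (2*j+1)" using True unfolding adjk_def by (simp_all add: div4a div4b div2a div4c div2c)
  then show ?thesis using assms memE by auto
next
  case False
  have "adjk k (2*i) (2*j+1)" "adjk k (2*i+1) (2*j)" using False assms unfolding adjk_def by (auto simp add: div4a div4b div2a div4c div2c)
  then show ?thesis using assms memE by auto
qed

lemma alt_M0c: "altM (Ec n k) (M0c n)"
  unfolding altM_def
proof (intro allI impI)
  fix a b c d assume ab: "{a,b} \<in> M0c n" and cd: "{c,d} \<in> M0c n" and ne: "{a,b} \<noteq> {c,d}"
  obtain i where i: "i < n" "{a,b} = {2*i, 2*i+1}" using M0c_form[OF ab] by blast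
  obtain j where j: "j < n" "{c,d} = {2*j, 2*j+1}" using M0c_form[OF cd] by blast
  have "i \<noteq> j" using ne i j by auto
  then show "({a,c} \<in> Ec n k \<and> {b,d} \<in> Ec n k) \<or> ({a,d} \<in> Ec n k \<and> {b,c} \<in> Ec n k)"
    using altM_sym[OF alt_ij[OF i(1) j(1)], of a b c d] i j by auto
qed




lemma LBc:
  assumes pm: "perfect_matching {..<2*n} (Ec n k) M" and fs: "forcing_set {..<2*n} (Ec n k) M S"
  shows "n - 1 - k \<le> card S"
proof -
  let ?V = "{..<2*n}" and ?E = "Ec n k"
  have sg: "simple_graph ?V ?E" by (rule sg_Ec)
  interpret P: pmctx ?V ?E M using sg pm by unfold_locales
  have notalt: "\<not> P.altex S" using forcing_not_altex[OF sg pm fs] .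
  have SM: "S \<subseteq> M" using fs unfolding forcing_set_def by blast
  have fr: False if "x < 2*n" "y < 2*n" "x \<notin> \<Union>S" "y \<notin> \<Union>S" "4*k \<le> x" "4*k \<le> y"
      "even x = even y" "x \<noteq> y" for x y
  proof -
    have xV: "x \<in> ?V" "y \<in> ?V" using that by auto
    have ex: "{x, P.p x} \<in> ?E" "{y, P.p y} \<in> ?E" using P.p_M xV P.ME by blast+
    have ax: "adjk k x (P.p x)" "adjk k y (P.p y)" "P.p x < 2*n" "P.p y < 2*n"
      using ex memE by blast+
    have px: "even (P.p x) \<noteq> even x" using ax(1) that(5) unfolding adjk_def by (auto split: if_splits)
    have py: "even (P.p y) \<noteq> even y" using ax(2) that(6) unfolding adjk_def by (auto split: if_splits)
    have a1: "adjk k x (P.p y)" using px py that(5,7) unfolding adjk_def by (auto split: if_splits)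
    have a2: "adjk k (P.p x) y" using px py that(6,7) unfolding adjk_def by (auto split: if_splits)
    have n1: "x \<noteq> P.p y" "P.p x \<noteq> y" using px py that(7) by auto
    have e1: "{x, P.p y} \<in> ?E" using a1 n1 ax that memE by blast
    have e2: "{P.p x, y} \<in> ?E" using a2 n1 ax that memE by blast
    have m1: "{x, P.p x} \<in> M" using P.p_M xV by blast
    have m2: "{P.p y, y} \<in> M" using P.p_M' xV by blast
    have "P.altex S"
      by (rule P.swap2[OF m1 m2]) (use n1 that SM e1 e2 in \<open>simp_all add: P.neq2 P.notS P.notS'\<close>)
    then show False using notalt by blast
  qed
  have fp: "i = j" if "i < n" "j < n" "2*i \<notin> \<Union>S" "2*i+1 \<notin> \<Union>S" "2*j \<notin> \<Union>S" "2*j+1 \<notin> \<Union>S" for i j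
  proof -
    have "{2*i, 2*i+1} = {2*j, 2*j+1}"
      by (rule L1[OF sg pm pm_M0 alt_M0c fs]) (use that M0c_mem in auto)
    then have "2*i = 2*j \<or> 2*i = 2*j+1" by blast
    then show ?thesis by presburger
  qed
  define U where "U = ?V - \<Union>S"
  have USV: "\<Union>S \<subseteq> ?V" using SM P.ME P.edge_in_V by blast
  have cUS: "card (\<Union>S) = 2 * card S" using P.card_Union_sub SM by blast
  have cU: "card U = 2*n - 2 * card S" unfolding U_def using USV cUS
    by (simp add: card_Diff_subset finite_subset)
  have le2n: "2 * card S \<le> 2*n" using USV cUS card_mono[of ?V "\<Union>S"] by simp
  define U1 where "U1 = {x\<in>U. x < 4*k}"
  define U2 where "U2 = {x\<in>U. 4*k \<le> x \<and> even x}"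
  define U3 where "U3 = {x\<in>U. 4*k \<le> x \<and> odd x}"
  have finU: "finite U" unfolding U_def by simp
  have fin123: "finite U1" "finite U2" "finite U3" unfolding U1_def U2_def U3_def using finU by simp_all
  have "U = U1 \<union> U2 \<union> U3" unfolding U1_def U2_def U3_def by auto
  then have cU123: "card U \<le> card U1 + card U2 + card U3"
    by (metis card_Un_le add_le_mono1 order_trans)
  have c2: "card U2 \<le> Suc 0"
  proof -
    have "\<forall>x\<in>U2. \<forall>y\<in>U2. x = y"
      using fr unfolding U2_def U_def by blast
    then show ?thesis using card_le_Suc0_iff_eq[OF fin123(2)] by blast
  qed
  have c3: "card U3 \<le> Suc 0"
  proof -
    have "\<forall>x\<in>U3. \<forall>y\<in>U3. x = y"
      using fr unfolding U3_def U_def by blast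
    then show ?thesis using card_le_Suc0_iff_eq[OF fin123(3)] by blast
  qed
  define T where "T = {x. \<exists>i. x = 2*i+1 \<and> 2*i \<in> U \<and> 2*i+1 \<in> U}"
  have finT: "finite T" unfolding T_def using finU by (auto intro: finite_subset[of _ U])
  have cT: "card T \<le> Suc 0"
  proof -
    have "\<forall>x\<in>T. \<forall>y\<in>T. x = y"
    proof (intro ballI)
      fix x y assume "x \<in> T" "y \<in> T"
      then obtain i j where ij: "x = 2*i+1" "2*i \<in> U" "2*i+1 \<in> U" "y = 2*j+1" "2*j \<in> U" "2*j+1 \<in> U"
        unfolding T_def by blast
      then have "i < n" "j < n" "2*i \<notin> \<Union>S" "2*i+1 \<notin> \<Union>S" "2*j \<notin> \<Union>S" "2*j+1 \<notin> \<Union>S"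
        unfolding U_def by auto
      then have "i = j" using fp by blast
      then show "x = y" using ij by simp
    qed
    then show ?thesis using card_le_Suc0_iff_eq[OF finT] by blast
  qed
  have injR: "inj_on (\<lambda>x. x div 2) (U1 - T)"
  proof
    fix x y assume xy: "x \<in> U1 - T" "y \<in> U1 - T" "x div 2 = y div 2"
    show "x = y"
    proof (rule ccontr)
      assume ne: "x \<noteq> y"
      define i where "i = x div 2"
      have "(x = 2*i \<and> y = 2*i+1) \<or> (x = 2*i+1 \<and> y = 2*i)" using ne xy(3) i_def by presburger
      then have "2*i+1 \<in> T" using xy unfolding T_def U1_def by auto
      then show False using xy \<open>(x = 2*i \<and> y = 2*i+1) \<or> (x = 2*i+1 \<and> y = 2*i)\<close> by auto
    qed
  qed
  have d2: "x div 2 < 2*k" if "x < 4*k" for x::nat using that by presburger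
  have "(\<lambda>x. x div 2) ` (U1 - T) \<subseteq> {..<2*k}"
  proof
    fix z assume "z \<in> (\<lambda>x. x div 2) ` (U1 - T)"
    then obtain x where "x \<in> U1" "z = x div 2" by blast
    then show "z \<in> {..<2*k}" using d2 unfolding U1_def by simp
  qed
  then have "card (U1 - T) \<le> card {..<2*k}" using card_inj_on_le[OF injR] by blast
  then have cR: "card (U1 - T) \<le> 2*k" by simp
  have "U1 \<subseteq> (U1 - T) \<union> T" by blast
  then have "card U1 \<le> card (U1 - T) + card T"
    by (metis card_Un_le card_mono finT fin123(1) finite_Diff finite_UnI order_trans)
  then have c1: "card U1 \<le> 2*k + 1" using cR cT by linarith
  show ?thesis using cU cU123 c1 c2 c3 le2n by linarith
qed




definition mate :: "nat \<Rightarrow> nat \<Rightarrow> nat" where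
  "mate k x = (if x < 4*k then (if x mod 4 < 2 then x + 2 else x - 2) else (if even x then x + 1 else x - 1))"

lemma mate_lo:
  assumes "x < 4*k"
  shows "mate k x < 4*k \<and> mate k x \<noteq> x \<and> mate k (mate k x) = x \<and> even (mate k x) = even x
         \<and> mate k x div 4 = x div 4"
proof (cases "x mod 4 < 2")
  case True
  then have m: "mate k x = x + 2" using assms unfolding mate_def by simp
  have "(x+2) div 4 = x div 4 \<and> (x+2) mod 4 \<ge> 2" using True by presburger
  moreover have "x + 2 < 4*k"
  proof -
    have "x = 4*(x div 4) + x mod 4" by simp
    moreover have "x div 4 < k" using assms by (simp add: less_mult_imp_div_less mult.commute)
    ultimately show ?thesis using True by linarith
  qed
  ultimately show ?thesis using m unfolding mate_def by auto
next
  case False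
  then have m: "mate k x = x - 2" using assms unfolding mate_def by simp
  have "x \<ge> 2" using False by presburger
  moreover have "(x-2) mod 4 < 2 \<and> (x-2) div 4 = x div 4"
  proof -
    obtain y where y: "x = y + 2" using \<open>x \<ge> 2\<close> by (metis add.commute le_Suc_ex)
    have "y mod 4 < 2 \<and> y div 4 = (y+2) div 4" using False y by presburger
    then show ?thesis using y by simp
  qed
  ultimately show ?thesis using m assms unfolding mate_def by (auto; linarith)
qed

lemma mate_hi:
  assumes "4*k \<le> x"
  shows "4*k \<le> mate k x \<and> mate k x \<noteq> x \<and> mate k (mate k x) = x \<and> even (mate k x) \<noteq> even x
         \<and> mate k x div 2 = x div 2 \<and> (even x \<longrightarrow> mate k x = x + 1) \<and> (odd x \<longrightarrow> mate k x = x - 1)"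
proof (cases "even x")
  case True
  then have m: "mate k x = x + 1" using assms unfolding mate_def by simp
  have "odd (x+1)" "(x+1) div 2 = x div 2" using True by presburger+
  then show ?thesis using m assms True unfolding mate_def by auto
next
  case False
  then have m: "mate k x = x - 1" using assms unfolding mate_def by simp
  have "4*k \<le> x - 1" "even (x-1)" "(x-1) div 2 = x div 2" "x \<ge> 1" using False assms by presburger+
  then show ?thesis using m assms False unfolding mate_def by auto
qed

lemma mate_props:
  assumes "x < 2*n" "2*k \<le> n - 1"
  shows "mate k x < 2*n \<and> mate k x \<noteq> x \<and> mate k (mate k x) = x \<and> adjk k x (mate k x)"
proof (cases "x < 4*k")
  case True
  then show ?thesis using mate_lo[OF True] assms unfolding adjk_def by auto
next
  case False
  then have h: "4*k \<le> x" by simp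
  have "mate k x < 2*n"
  proof (cases "even x")
    case True
    then have "x + 1 < 2*n" using assms(1) by presburger
    then show ?thesis using mate_hi[OF h] True by simp
  next
    case False
    then show ?thesis using mate_hi[OF h] assms(1) by simp
  qed
  then show ?thesis using mate_hi[OF h] unfolding adjk_def by auto
qed

definition Mst :: "nat \<Rightarrow> nat \<Rightarrow> nat set set" where
  "Mst n k = {{x, mate k x} | x. x \<in> {..<2*n}}"

definition Cst :: "nat \<Rightarrow> nat \<Rightarrow> nat set" where
  "Cst n k = {x. x < 2*n - 2 \<and> (odd x \<or> 4*k \<le> x)}"

definition Sst :: "nat \<Rightarrow> nat \<Rightarrow> nat set set" where
  "Sst n k = {{x, mate k x} | x. x \<in> Cst n k}"

lemma pm_Mst: "2*k \<le> n - 1 \<Longrightarrow> perfect_matching {..<2*n} (Ec n k) (Mst n k)"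
  unfolding Mst_def
proof (rule pm_inv)
  fix x assume "2*k \<le> n - 1" "x \<in> {..<2*n}"
  then show "mate k x \<in> {..<2*n} \<and> mate k x \<noteq> x \<and> mate k (mate k x) = x \<and> {x, mate k x} \<in> Ec n k"
    using mate_props[of x n k] memE by auto
qed

lemma mate_C: assumes "x \<in> Cst n k" "2*k \<le> n - 1" shows "mate k x \<in> Cst n k"
proof (cases "x < 4*k")
  case True
  then have "odd x" using assms(1) unfolding Cst_def by auto
  moreover have "4*k \<le> 2*n - 2" using assms(2) by simp
  ultimately show ?thesis using mate_lo[OF True] unfolding Cst_def by auto
next
  case False
  then have h: "4*k \<le> x" by simp
  have xl: "x < 2*n - 2" using assms(1) unfolding Cst_def by auto
  have "mate k x < 2*n - 2"
  proof (cases "even x")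
    case True
    then have "x + 1 < 2*n - 2" using xl by presburger
    then show ?thesis using mate_hi[OF h] True by simp
  next
    case False
    then show ?thesis using mate_hi[OF h] xl by simp
  qed
  then show ?thesis using mate_hi[OF h] unfolding Cst_def by auto
qed

lemma card_Sst:
  assumes k: "2*k \<le> n - 1"
  shows "card (Sst n k) \<le> n - 1 - k"
proof -
  interpret P: pmctx "{..<2*n}" "Ec n k" "Mst n k" using sg_Ec pm_Mst[OF k] by unfold_locales
  have CV: "Cst n k \<subseteq> {..<2*n}" unfolding Cst_def by auto
  have sub: "Sst n k \<subseteq> Mst n k" unfolding Sst_def Mst_def using CV by blast
  have U: "\<Union>(Sst n k) = Cst n k"
  proof
    show "\<Union>(Sst n k) \<subseteq> Cst n k" unfolding Sst_def using mate_C[OF _ k] by blast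
    show "Cst n k \<subseteq> \<Union>(Sst n k)" unfolding Sst_def by blast
  qed
  have c: "card (Cst n k) = 2 * card (Sst n k)" using P.card_Union_sub[OF sub] U by simp
  have "Cst n k \<subseteq> ((\<lambda>i. 2*i+1) ` {..<2*k}) \<union> {4*k..<2*n-2}"
  proof
    fix x assume x: "x \<in> Cst n k"
    show "x \<in> ((\<lambda>i. 2*i+1) ` {..<2*k}) \<union> {4*k..<2*n-2}"
    proof (cases "x < 4*k")
      case True
      then have "odd x" using x unfolding Cst_def by auto
      then have "x = 2*(x div 2)+1" "x div 2 < 2*k" using True by presburger+
      then show ?thesis by blast
    next
      case False then show ?thesis using x unfolding Cst_def by auto
    qed
  qed
  then have "card (Cst n k) \<le> card (((\<lambda>i. 2*i+1) ` {..<2*k}) \<union> {4*k..<2*n-2})"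
    by (intro card_mono) auto
  also have "\<dots> \<le> card ((\<lambda>i. 2*i+1) ` {..<2*k}) + card {4*k..<2*n-2}" by (rule card_Un_le)
  also have "\<dots> \<le> 2*k + (2*n - 2 - 4*k)" using card_image_le[of "{..<2*k}" "\<lambda>i. 2*i+1"] by simp
  finally show ?thesis using c k by linarith
qed

lemma em4: "even (x::nat) \<Longrightarrow> x mod 4 = 0 \<or> x mod 4 = 2" by presburger
lemma am: assumes "even (x::nat)" "even y" "x div 4 = y div 4" "x \<noteq> y"
  shows "y = (if x mod 4 < 2 then x + 2 else x - 2)"
proof -
  define q where "q = x div 4"
  have x: "x = 4*q + x mod 4" unfolding q_def by simp
  have y: "y = 4*q + y mod 4" unfolding q_def using assms(3) by simp
  have hx: "x mod 4 = 0 \<or> x mod 4 = 2" and hy: "y mod 4 = 0 \<or> y mod 4 = 2" using em4 assms by blast+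
  show ?thesis
  proof (cases "x mod 4 = 0")
    case True
    then have "y mod 4 = 2" using hy x y assms(4) by linarith
    then show ?thesis using True x y by simp
  next
    case False
    then have "x mod 4 = 2" using hx by simp
    moreover then have "y mod 4 = 0" using hy x y assms(4) by linarith
    ultimately show ?thesis using x y by simp
  qed
qed

lemma arith_mate: "even x \<Longrightarrow> even y \<Longrightarrow> x div 4 = y div 4 \<Longrightarrow> x \<noteq> y \<Longrightarrow> x < 4*k \<Longrightarrow> y = mate k x"
  unfolding mate_def using am by simp

lemma forcing_Sst:
  assumes k: "2*k \<le> n - 1" and n: "n \<ge> 1"
  shows "forcing_set {..<2*n} (Ec n k) (Mst n k) (Sst n k)"
  unfolding forcing_set_def
proof (intro conjI allI impI)
  let ?V = "{..<2*n}"
  interpret P: pmctx "?V" "Ec n k" "Mst n k" using sg_Ec pm_Mst[OF k] by unfold_locales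
  have CV: "Cst n k \<subseteq> ?V" unfolding Cst_def by auto
  show sub: "Sst n k \<subseteq> Mst n k" unfolding Sst_def Mst_def using CV by blast
  have U: "\<Union>(Sst n k) = Cst n k"
  proof
    show "\<Union>(Sst n k) \<subseteq> Cst n k" unfolding Sst_def using mate_C[OF _ k] by blast
    show "Cst n k \<subseteq> \<Union>(Sst n k)" unfolding Sst_def by blast
  qed
  fix M' assume a: "perfect_matching ?V (Ec n k) M' \<and> Sst n k \<subseteq> M'"
  interpret P': pmctx "?V" "Ec n k" M' using sg_Ec a by unfold_locales blast+
  have SM': "Sst n k \<subseteq> M'" using a by blast
  define X where "X = ?V - Cst n k"
  have cov: "\<forall>v\<in>?V. v \<notin> X \<longrightarrow> v \<in> \<Union>(Sst n k)" unfolding X_def using U by blast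
  have pX: "P'.p x \<in> X \<and> adjk k x (P'.p x) \<and> P'.p x < 2*n \<and> P'.p x \<noteq> x" if "x \<in> X" for x
  proof -
    have xV: "x \<in> ?V" using that unfolding X_def by blast
    have "x \<notin> \<Union>(Sst n k)" using that U unfolding X_def by blast
    then have "P'.p x \<in> X" using P'.partner_in[OF SM' cov _ P'.p_M[OF xV]] by blast
    moreover have e: "{x, P'.p x} \<in> Ec n k" using P'.p_M[OF xV] P'.ME by blast
    have "P'.p x < 2*n \<and> x \<noteq> P'.p x \<and> adjk k x (P'.p x)" using e unfolding memE by blast
    ultimately show ?thesis by auto
  qed
  have Xc: "x = 2*n-2 \<or> x = 2*n-1 \<or> (even x \<and> x < 4*k)" if "x \<in> X" for x
    using that n unfolding X_def Cst_def by auto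
  have aX: "2*n-2 \<in> X" "2*n-1 \<in> X" using n unfolding X_def Cst_def by auto
  have four: "4*k \<le> 2*n-2" using k by simp
  have pa: "P'.p (2*n-2) = 2*n-1"
  proof -
    let ?y = "P'.p (2*n-2)"
    have h: "?y \<in> X" "adjk k (2*n-2) ?y" "?y < 2*n" "?y \<noteq> 2*n-2" using pX[OF aX(1)] by blast+
    have "odd ?y"
    proof
      assume "even ?y"
      moreover have "even (2*n-2)" using n by presburger
      ultimately have "2*n-2 < 4*k" using h(2) unfolding adjk_def by auto
      then show False using four by simp
    qed
    then show ?thesis using Xc[OF h(1)] h(4) n by presburger
  qed
  have pb: "P'.p (2*n-1) = 2*n-2" using P'.pswap[OF _ pa] n by simp
  have plo: "P'.p x = mate k x" if "x \<in> X" "even x" "x < 4*k" for x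
  proof -
    let ?y = "P'.p x"
    have h: "?y \<in> X" "adjk k x ?y" "?y < 2*n" "?y \<noteq> x" using pX[OF that(1)] by blast+
    have xV: "x \<in> ?V" using that(1) unfolding X_def by blast
    have "?y \<noteq> 2*n-2"
    proof
      assume "?y = 2*n-2"
      then have "P'.p (2*n-2) = x" using P'.pswap[OF xV] by blast
      then show False using pa that(3) four by simp
    qed
    moreover have "?y \<noteq> 2*n-1"
    proof
      assume "?y = 2*n-1"
      then have "P'.p (2*n-1) = x" using P'.pswap[OF xV] by blast
      then show False using pb that(3) four by simp
    qed
    ultimately have ye: "even ?y" "?y < 4*k" using Xc[OF h(1)] by blast+
    then have "x div 4 = ?y div 4" using h(2) that(2) unfolding adjk_def by auto
    then show ?thesis using arith_mate[OF that(2) ye(1)] h(4) that(3) by metis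
  qed
  have "Mst n k \<subseteq> M'"
  proof
    fix e assume "e \<in> Mst n k"
    then obtain x where x: "e = {x, mate k x}" "x < 2*n" unfolding Mst_def by blast
    show "e \<in> M'"
    proof (cases "x \<in> Cst n k")
      case True
      then have "e \<in> Sst n k" unfolding Sst_def using x by blast
      then show ?thesis using SM' by blast
    next
      case False
      then have xX: "x \<in> X" unfolding X_def using x by blast
      have xV: "x \<in> ?V" using x by simp
      have "P'.p x = mate k x"
      proof -
        consider "x = 2*n-2" | "x = 2*n-1" | "even x \<and> x < 4*k" using Xc[OF xX] by blast
        then show ?thesis
        proof cases
          case 1
          have "even x" using 1 n by presburger
          then show ?thesis using 1 pa mate_hi[of k x] four n by simp
        next
          case 2
          have "odd x" using 2 n by presburger
          moreover have "4*k \<le> x" using 2 four by simp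
          ultimately show ?thesis using 2 pb mate_hi[of k x] n by simp
        next
          case 3
          then show ?thesis using plo xX by blast
        qed
      qed
      then show ?thesis using P'.p_M[OF xV] x by simp
    qed
  qed
  then show "M' = Mst n k" using P.pm_sub_eq a by blast
qed




theorem theorem5p7:
  fixes n :: nat
  assumes "n \<ge> 1"
  shows "(\<forall>(V :: 'a set) E. in_G2n n V E \<and> max_forcing_number V E = n - 1 \<longrightarrow>
            n div 2 \<le> min_forcing_number V E \<and> min_forcing_number V E \<le> n - 1)
       \<and> (\<forall>m. n div 2 \<le> m \<and> m \<le> n - 1 \<longrightarrow>
            (\<exists>(V :: nat set) E. in_G2n n V E \<and> max_forcing_number V E = n - 1 \<and>
                                min_forcing_number V E = m))"
proof (intro conjI allI impI)
  fix V :: "'a set" and E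
  assume h: "in_G2n n V E \<and> max_forcing_number V E = n - 1"
  have sg: "simple_graph V E" and cV: "card V = 2*n" and ex: "\<exists>M. perfect_matching V E M"
    using h unfolding in_G2n_def by blast+
  obtain M1 where M1: "perfect_matching V E M1" using ex by blast
  obtain M0 where M0: "perfect_matching V E M0" "max_forcing_number V E = forcing_number V E M0"
    using max_ex[OF sg M1] by blast
  have fn0: "forcing_number V E M0 = n - 1" using M0 h by simp
  have alt: "altM E M0" using lemmaK[OF sg M0(1) cV fn0] .
  obtain M where M: "perfect_matching V E M" "min_forcing_number V E = forcing_number V E M"
    using min_ex[OF sg M1] by blast
  interpret P: pmctx V E M using sg M(1) by unfold_locales
  obtain S where S: "forcing_set V E M S" "forcing_number V E M = card S" using P.fn_ex by blast
  have "n \<le> 2 * card S + 1" using part1_bound[OF sg M0(1) alt cV M(1) S(1)] .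
  then have "n div 2 \<le> card S" by linarith
  then show "n div 2 \<le> min_forcing_number V E" using M(2) S(2) by simp
  show "min_forcing_number V E \<le> n - 1" using min_le[OF sg M0(1)] fn0 by simp
next
  fix m assume hm: "n div 2 \<le> m \<and> m \<le> n - 1"
  define k where "k = n - 1 - m"
  have k: "2*k \<le> n - 1" using hm unfolding k_def by linarith
  have km: "n - 1 - k = m" using hm unfolding k_def by linarith
  let ?V = "{..<2*n}" and ?E = "Ec n k"
  have sg: "simple_graph ?V ?E" by (rule sg_Ec)
  have pm0: "perfect_matching ?V ?E (M0c n)" by (rule pm_M0)
  have G: "in_G2n n ?V ?E" unfolding in_G2n_def using sg pm0 by auto
  have mx: "max_forcing_number ?V ?E = n - 1"
  proof -
    obtain M where M: "perfect_matching ?V ?E M" "max_forcing_number ?V ?E = forcing_number ?V ?E M"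
      using max_ex[OF sg pm0] by blast
    interpret P: pmctx ?V ?E M using sg M(1) by unfold_locales
    have "forcing_number ?V ?E M \<le> n - 1" using P.fn_upper[of n] assms by simp
    moreover have "n - 1 \<le> forcing_number ?V ?E (M0c n)"
      using alt_fn_M0[OF sg pm0 alt_M0c] by simp
    moreover have "forcing_number ?V ?E (M0c n) \<le> max_forcing_number ?V ?E"
      using max_ge[OF sg pm0] .
    ultimately show ?thesis using M(2) by linarith
  qed
  have mn: "min_forcing_number ?V ?E = m"
  proof -
    obtain M where M: "perfect_matching ?V ?E M" "min_forcing_number ?V ?E = forcing_number ?V ?E M"
      using min_ex[OF sg pm0] by blast
    interpret P: pmctx ?V ?E M using sg M(1) by unfold_locales
    obtain S where S: "forcing_set ?V ?E M S" "forcing_number ?V ?E M = card S" using P.fn_ex by blast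
    have lo: "n - 1 - k \<le> card S" using LBc[OF M(1) S(1)] .
    have pst: "perfect_matching ?V ?E (Mst n k)" using pm_Mst[OF k] .
    interpret Q: pmctx ?V ?E "Mst n k" using sg pst by unfold_locales
    have "forcing_number ?V ?E (Mst n k) \<le> card (Sst n k)"
      using Q.fn_le[OF forcing_Sst[OF k assms]] .
    then have "min_forcing_number ?V ?E \<le> n - 1 - k"
      using min_le[OF sg pst] card_Sst[OF k] by linarith
    then show ?thesis using lo M(2) S(2) km by linarith
  qed
  show "\<exists>(V :: nat set) E. in_G2n n V E \<and> max_forcing_number V E = n - 1 \<and> min_forcing_number V E = m"
    using G mx mn by blast
qed


end
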